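(* Let $R$ be an $L$-layered domain$^\dagger$ (in particular $R$ is $\nu$-bipotent) whose tangible layer $R_1$ is a finite set. Then either $1\in L$ is infinite (i.e. $1+1=1$ in $L$), or the $\nu$-relation is trivial on $R_1$, in the sense that $a\cong_\nu \mathbb{1}_R$ for all $a\in R_1$.
   Context: A semiring$^\dagger$ is a structure $(L,+,\cdot,1)$ with $(L,\cdot,1)$ a monoid, $(L,+)$ an abelian semigroup, and two-sided distributivity (no zero element required). Let $L$ be a semiring$^\dagger$ with a designated sub-semiring$^\dagger$ $L_+$ of positive elements ($1\in L_+$); write $k\ge \ell$ iff $k=\ell$ or $k=\ell+p$ for some $p\in L_+$, assumed to be a partial order. An element $\ell\in L$ is finite if $\ell+m\neq\ell$ for all $m\in L_+$, and infinite otherwise. An $L$-quasi-layered domain$^\dagger$ is a commutative semiring$^\dagger$ $R$ with a decomposition into disjoint subsets $R=\bigsqcup_{\ell\in L}R_\ell$ and sort transition maps $\nu_{m,\ell}:R_\ell\to R_m$ for $m\ge\ell$, with $\nu_{\ell,\ell}=\mathrm{id}$, $\nu_{m,\ell}\circ\nu_{\ell,k}=\nu_{m,k}$, satisfying: (A1) $\mathbb{1}_R\in R_1$; (A2) $R_kR_\ell\subseteq R_{k\ell}$; (A3) $\nu_{m,k}(a)\nu_{m',\ell}(b)=\nu_{mm',k\ell}(ab)$ for $a\in R_k,b\in R_\ell$, $m\ge k,m'\ge\ell$; (A4) $\nu_{\ell,k}(a)+\nu_{\ell',k}(a)=\nu_{\ell+\ell',k}(a)$; (B) if $a\in R_k$,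 $b\in R_\ell$, $a\cong_\nu b$ then $a+b\in R_{k+\ell}$, $a+b\cong_\nu a$, and $a+b=a$ if $k$ is infinite. Here $a\cong_\nu b$ ($a\in R_k,b\in R_\ell$) means $\nu_{m,k}(a)=\nu_{m,\ell}(b)$ for some $m\ge k,\ell$; $a\le_\nu b$ means $a+b\cong_\nu b$; $a<_\nu b$ means $a\le_\nu b$ and $a\not\cong_\nu b$. $R$ is an $L$-layered domain$^\dagger$ if it is $\nu$-bipotent: for $a\not\cong_\nu b$ either $a<_\nu b$ or $b<_\nu a$, and $a<_\nu b$ implies $a+b=b$. Elements of $R_1$ are called tangible. *)

theory Defs
  imports Main
begin

text \<open>The semiring-dagger L is a type of class semiring (abelian additive semigroup,
  multiplicative semigroup, two-sided distributivity, no zero) together with monoid_mult.  The disjoint decomposition of R into layers R_l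
  is encoded by the layer function lay, with R_l = {a. lay a = l}.
  The sort transition maps are nu m l (meaningful on R_l for m >= l).\<close>

definition L_ge :: "'l::semiring set \<Rightarrow> 'l \<Rightarrow> 'l \<Rightarrow> bool" where
  "L_ge Lp k l \<longleftrightarrow> k = l \<or> (\<exists>p\<in>Lp. k = l + p)"

definition L_finite :: "'l::semiring set \<Rightarrow> 'l \<Rightarrow> bool" where
  "L_finite Lp l \<longleftrightarrow> (\<forall>m\<in>Lp. l + m \<noteq> l)"

definition nu_cong :: "'l::semiring set \<Rightarrow> ('r \<Rightarrow> 'l) \<Rightarrow> ('l \<Rightarrow> 'l \<Rightarrow> 'r \<Rightarrow> 'r) \<Rightarrow> 'r \<Rightarrow> 'r \<Rightarrow> bool" where
  "nu_cong Lp lay nu a b \<longleftrightarrow>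
     (\<exists>m. L_ge Lp m (lay a) \<and> L_ge Lp m (lay b) \<and> nu m (lay a) a = nu m (lay b) b)"

definition nu_le :: "'l::semiring set \<Rightarrow> ('r::semiring \<Rightarrow> 'l) \<Rightarrow> ('l \<Rightarrow> 'l \<Rightarrow> 'r \<Rightarrow> 'r) \<Rightarrow> 'r \<Rightarrow> 'r \<Rightarrow> bool" where
  "nu_le Lp lay nu a b \<longleftrightarrow> nu_cong Lp lay nu (a + b) b"

definition nu_less :: "'l::semiring set \<Rightarrow> ('r::semiring \<Rightarrow> 'l) \<Rightarrow> ('l \<Rightarrow> 'l \<Rightarrow> 'r \<Rightarrow> 'r) \<Rightarrow> 'r \<Rightarrow> 'r \<Rightarrow> bool" where
  "nu_less Lp lay nu a b \<longleftrightarrow> nu_le Lp lay nu a b \<and> \<not> nu_cong Lp lay nu a b"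

definition positive_set :: "'l::{semiring,monoid_mult} set \<Rightarrow> bool" where
  "positive_set Lp \<longleftrightarrow>
     1 \<in> Lp \<and> (\<forall>p\<in>Lp. \<forall>q\<in>Lp. p + q \<in> Lp \<and> p * q \<in> Lp) \<and>
     (\<forall>k. L_ge Lp k k) \<and>
     (\<forall>k l m. L_ge Lp k l \<longrightarrow> L_ge Lp l m \<longrightarrow> L_ge Lp k m) \<and>
     (\<forall>k l. L_ge Lp k l \<longrightarrow> L_ge Lp l k \<longrightarrow> k = l)"

definition quasi_layered_domain ::
  "'l::{semiring,monoid_mult} set \<Rightarrow> ('r::{comm_semiring,comm_monoid_mult} \<Rightarrow> 'l)
     \<Rightarrow> ('l \<Rightarrow> 'l \<Rightarrow> 'r \<Rightarrow> 'r) \<Rightarrow> bool" where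
  "quasi_layered_domain Lp lay nu \<longleftrightarrow>
     positive_set Lp \<and>
     \<comment> \<open>sort transition maps nu m l : R_l -> R_m for m >= l\<close>
     (\<forall>a m. L_ge Lp m (lay a) \<longrightarrow> lay (nu m (lay a) a) = m) \<and>
     (\<forall>a. nu (lay a) (lay a) a = a) \<and>
     (\<forall>a l m. L_ge Lp l (lay a) \<longrightarrow> L_ge Lp m l \<longrightarrow> nu m l (nu l (lay a) a) = nu m (lay a) a) \<and>
     \<comment> \<open>(A1)\<close>
     lay 1 = 1 \<and>
     \<comment> \<open>(A2)\<close>
     (\<forall>a b. lay (a * b) = lay a * lay b) \<and>
     \<comment> \<open>(A3)\<close>
     (\<forall>a b m m'. L_ge Lp m (lay a) \<longrightarrow> L_ge Lp m' (lay b) \<longrightarrow>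
        nu m (lay a) a * nu m' (lay b) b = nu (m * m') (lay a * lay b) (a * b)) \<and>
     \<comment> \<open>(A4)\<close>
     (\<forall>a l l'. L_ge Lp l (lay a) \<longrightarrow> L_ge Lp l' (lay a) \<longrightarrow>
        nu l (lay a) a + nu l' (lay a) a = nu (l + l') (lay a) a) \<and>
     \<comment> \<open>(B)\<close>
     (\<forall>a b. nu_cong Lp lay nu a b \<longrightarrow>
        lay (a + b) = lay a + lay b \<and> nu_cong Lp lay nu (a + b) a \<and>
        (\<not> L_finite Lp (lay a) \<longrightarrow> a + b = a))"

definition layered_domain ::
  "'l::{semiring,monoid_mult} set \<Rightarrow> ('r::{comm_semiring,comm_monoid_mult} \<Rightarrow> 'l)
     \<Rightarrow> ('l \<Rightarrow> 'l \<Rightarrow> 'r \<Rightarrow> 'r) \<Rightarrow> bool" where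
  "layered_domain Lp lay nu \<longleftrightarrow>
     quasi_layered_domain Lp lay nu \<and>
     (\<forall>a b. \<not> nu_cong Lp lay nu a b \<longrightarrow> nu_less Lp lay nu a b \<or> nu_less Lp lay nu b a) \<and>
     (\<forall>a b. nu_less Lp lay nu a b \<longrightarrow> a + b = b)"

end

theory Submission
  imports Defs
begin

lemma pow_step:
  fixes a :: "'r::{comm_semiring,comm_monoid_mult}"
  shows "a ^ n * (a + 1) = a ^ Suc n + a ^ n"
proof -
  have "a ^ n * (a + 1) = a ^ n * a + a ^ n * 1" by (rule distrib_left)
  also have "\<dots> = a ^ Suc n + a ^ n" by (simp add: mult.commute)
  finally show ?thesis .
qed

lemma pow_down:
  fixes a :: "'r::{comm_semiring,comm_monoid_mult}"
  assumes "a + 1 = 1"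
  shows "a ^ (k + Suc d) + a ^ k = a ^ k"
proof (induction d)
  case 0
  show ?case using pow_step[of a k] assms by simp
next
  case (Suc d)
  have e: "a ^ Suc (k + Suc d) + a ^ (k + Suc d) = a ^ (k + Suc d)"
    using pow_step[of a "k + Suc d"] assms by simp
  have "a ^ (k + Suc (Suc d)) + a ^ k = a ^ Suc (k + Suc d) + (a ^ (k + Suc d) + a ^ k)"
    using Suc by simp
  also have "\<dots> = (a ^ Suc (k + Suc d) + a ^ (k + Suc d)) + a ^ k"
    by (rule add.assoc[symmetric])
  also have "\<dots> = a ^ k" using e Suc by simp
  finally show ?case .
qed

lemma pow_up:
  fixes a :: "'r::{comm_semiring,comm_monoid_mult}"
  assumes "1 + a = a"
  shows "a ^ (k + Suc d) + a ^ k = a ^ (k + Suc d)"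
proof (induction d)
  case 0
  have h: "a + 1 = a" using assms by (simp add: add.commute)
  have "a ^ Suc k + a ^ k = a ^ k * (a + 1)" using pow_step[of a k] by simp
  also have "\<dots> = a ^ k * a" using h by simp
  also have "\<dots> = a ^ Suc k" by (simp add: mult.commute)
  finally show ?case by simp
next
  case (Suc d)
  have e: "a ^ Suc (k + Suc d) + a ^ (k + Suc d) = a ^ Suc (k + Suc d)"
  proof -
    have h: "a + 1 = a" using assms by (simp add: add.commute)
    have "a ^ Suc (k + Suc d) + a ^ (k + Suc d) = a ^ (k + Suc d) * (a + 1)"
      using pow_step[of a "k + Suc d"] by simp
    also have "\<dots> = a ^ (k + Suc d) * a" using h by simp
    also have "\<dots> = a ^ Suc (k + Suc d)" by (simp only: power_Suc mult.commute)
    finally show ?thesis .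
  qed
  have "a ^ (k + Suc (Suc d)) + a ^ k = (a ^ Suc (k + Suc d) + a ^ (k + Suc d)) + a ^ k"
    using e by simp
  also have "\<dots> = a ^ Suc (k + Suc d) + (a ^ (k + Suc d) + a ^ k)"
    by (rule add.assoc)
  also have "\<dots> = a ^ Suc (k + Suc d)" using e Suc by simp
  finally show ?case by simp
qed

theorem corollary3p15:
  fixes Lp :: "'l::{semiring,monoid_mult} set"
    and lay :: "'r::{comm_semiring,comm_monoid_mult} \<Rightarrow> 'l"
    and nu :: "'l \<Rightarrow> 'l \<Rightarrow> 'r \<Rightarrow> 'r"
  assumes "layered_domain Lp lay nu"
    and "finite {a. lay a = 1}"
  shows "\<not> L_finite Lp 1 \<or> (\<forall>a. lay a = 1 \<longrightarrow> nu_cong Lp lay nu a 1)"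
proof (rule ccontr)
  assume "\<not> ?thesis"
  then have fin: "L_finite Lp 1" and "\<exists>a. lay a = 1 \<and> \<not> nu_cong Lp lay nu a 1" by auto
  then obtain a where la: "lay a = 1" and nc: "\<not> nu_cong Lp lay nu a 1" by blast
  have Q: "quasi_layered_domain Lp lay nu" using assms(1) unfolding layered_domain_def by blast
  have bip: "nu_less Lp lay nu a 1 \<or> nu_less Lp lay nu 1 a"
    and ab: "\<And>x y. nu_less Lp lay nu x y \<Longrightarrow> x + y = y"
    using assms(1) nc unfolding layered_domain_def by blast+
  have l1: "lay 1 = 1" using Q unfolding quasi_layered_domain_def by (elim conjE)
  have lm: "\<And>x y. lay (x * y) = lay x * lay y"
    using Q unfolding quasi_layered_domain_def by (elim conjE) simp
  have B: "\<And>x y. nu_cong Lp lay nu x y \<Longrightarrow> lay (x + y) = lay x + lay y"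
  proof -
    fix x y assume c: "nu_cong Lp lay nu x y"
    have "\<forall>a b. nu_cong Lp lay nu a b \<longrightarrow>
        lay (a + b) = lay a + lay b \<and> nu_cong Lp lay nu (a + b) a \<and>
        (\<not> L_finite Lp (lay a) \<longrightarrow> a + b = a)"
      using Q unfolding quasi_layered_domain_def by (elim conjE)
    then show "lay (x + y) = lay x + lay y" using c by simp
  qed
  have "positive_set Lp" using Q unfolding quasi_layered_domain_def by (elim conjE)
  then have p1: "1 \<in> Lp" unfolding positive_set_def by (elim conjE)
  have lp: "lay (a ^ n) = 1" for n
    by (induction n) (simp_all add: l1 lm la)
  have "\<not> inj (\<lambda>n::nat. a ^ n)"
  proof
    assume "inj (\<lambda>n::nat. a ^ n)"
    moreover have "finite (range (\<lambda>n::nat. a ^ n))"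
      using assms(2) by (rule finite_subset[rotated]) (auto simp: lp)
    ultimately have "finite (UNIV :: nat set)" using finite_imageD by blast
    then show False by simp
  qed
  then have "\<exists>i j :: nat. i \<noteq> j \<and> a ^ i = a ^ j" unfolding inj_on_def by auto
  then obtain i j :: nat where "i \<noteq> j" "a ^ i = a ^ j" by (elim exE conjE)
  then obtain k d where eq: "a ^ (k + Suc d) = a ^ k"
  proof (cases "i < j")
    case True
    then obtain d where "j = Suc (i + d)" using less_imp_Suc_add by blast
    then have jd: "j = i + Suc d" by simp
    have "a ^ j = a ^ i" using \<open>a ^ i = a ^ j\<close> by (rule sym)
    then have "a ^ (i + Suc d) = a ^ i" unfolding jd .
    then show ?thesis by (rule that)
  next
    case False
    then have "j < i" using \<open>i \<noteq> j\<close> by simp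
    then obtain d where "i = Suc (j + d)" using less_imp_Suc_add by blast
    then have id: "i = j + Suc d" by simp
    have "a ^ i = a ^ j" by fact
    then have "a ^ (j + Suc d) = a ^ j" unfolding id .
    then show ?thesis by (rule that)
  qed
  have ee: "a ^ k + a ^ k = a ^ k"
  proof (cases "nu_less Lp lay nu a 1")
    case True
    then have "a + 1 = 1" by (rule ab)
    from pow_down[OF this, of k d] show ?thesis unfolding eq .
  next
    case False
    then have "nu_less Lp lay nu 1 a" using bip by blast
    then have "1 + a = a" by (rule ab)
    from pow_up[OF this, of k d] show ?thesis unfolding eq .
  qed
  have "nu_cong Lp lay nu (a ^ k) (a ^ k)" unfolding nu_cong_def L_ge_def by blast
  then have "lay (a ^ k + a ^ k) = lay (a ^ k) + lay (a ^ k)" by (rule B)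
  then have "(1::'l) + 1 = 1" unfolding ee lp by (rule sym)
  then show False using fin p1 unfolding L_finite_def by blast
qed

end
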